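(* Let $S$ be a locally compact Hausdorff space with Borel $\sigma$-algebra $\mathscr{S}$, let $N>n$, and let $X=(X_1,\ldots,X_n)$ be an exchangeable random element of $S^n$ such that the law of $X_1$ is tight. If $\mathcal L$ is an extending functional (for $n$, $N$ and the law of $X$) with $\|\mathcal L\|=1$, then the restriction of $\mathcal L$ to the space $C_c(S^N)$ of continuous compactly supported functions on $S^N$ has norm $1$ (with respect to the sup norm).
   Context: $b(S^k)$ is the space of bounded measurable real functions on $S^k$ with the sup norm. With $\mathfrak S[n,N]$ the set of injections $\{1,\ldots,n\}\to\{1,\ldots,N\}$ and $(N)_n=N(N-1)\cdots(N-n+1)$, $U^N_ng(x_1,\ldots,x_N)=\frac1{(N)_n}\sum_{\sigma\in\mathfrak S[n,N]}g(x_{\sigma(1)},\ldots,x_{\sigma(n)})$. The primitive extending functional $\mathcal E$ on $U^N_n(b(S^n))$ is $\mathcal E(U^N_ng)=\mathbb{E}\,g(X)$ (well defined). An extending functional is a linear functional $\mathcal L:b(S^N)\to\mathbb{R}$ which is invariant under permutations of the arguments of its input, agrees with $\mathcal E$ on $U^N_n(b(S^n))$, and has $\|\mathcal L\|=\|\mathcal E\|$. A probability measure $P$ on $S$ is tight if for every $\epsilon>0$ there is a compact $K$ with $P(K)\ge1-\epsilon$. *)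

theory Defs
  imports "HOL-Analysis.Analysis" "HOL-Probability.Probability"
begin

text \<open>Points of S^k are extensional functions on {..<k} (coordinates 0..k-1).
  S^k carries the product sigma-algebra of Borel sigma-algebras.\<close>

abbreviation SpM :: "nat \<Rightarrow> (nat \<Rightarrow> 'a::topological_space) measure" where
  "SpM k \<equiv> Pi\<^sub>M {..<k} (\<lambda>_. borel)"

definition bmeas :: "nat \<Rightarrow> ((nat \<Rightarrow> 'a::topological_space) \<Rightarrow> real) set" where
  "bmeas k = {f. f \<in> borel_measurable (SpM k) \<and> (\<exists>B. \<forall>x\<in>space (SpM k). \<bar>f x\<bar> \<le> B)}"

definition supnorm :: "nat \<Rightarrow> ((nat \<Rightarrow> 'a::topological_space) \<Rightarrow> real) \<Rightarrow> real" where
  "supnorm k f = (SUP x\<in>space (SpM k). \<bar>f x\<bar>)"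

definition fnorm :: "nat \<Rightarrow> (((nat \<Rightarrow> 'a::topological_space) \<Rightarrow> real) \<Rightarrow> real)
     \<Rightarrow> ((nat \<Rightarrow> 'a) \<Rightarrow> real) set \<Rightarrow> ereal" where
  "fnorm k L F = (SUP f\<in>{f\<in>F. supnorm k f \<le> 1}. ereal \<bar>L f\<bar>)"

definition ffac :: "nat \<Rightarrow> nat \<Rightarrow> real" where
  "ffac N n = (\<Prod>i<n. real (N - i))"

text \<open>Injections {1..n} \<rightarrow> {1..N}, shifted to {..<n} \<rightarrow> {..<N}\<close>
definition injs :: "nat \<Rightarrow> nat \<Rightarrow> (nat \<Rightarrow> nat) set" where
  "injs n N = {\<sigma>\<in>{..<n} \<rightarrow>\<^sub>E {..<N}. inj_on \<sigma> {..<n}}"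

definition U :: "nat \<Rightarrow> nat \<Rightarrow> ((nat \<Rightarrow> 'a) \<Rightarrow> real) \<Rightarrow> (nat \<Rightarrow> 'a) \<Rightarrow> real" where
  "U N n g x = (1 / ffac N n) * (\<Sum>\<sigma>\<in>injs n N. g (restrict (x \<circ> \<sigma>) {..<n}))"

definition exchangeable :: "'w measure \<Rightarrow> nat \<Rightarrow> ('w \<Rightarrow> nat \<Rightarrow> 'a::topological_space) \<Rightarrow> bool" where
  "exchangeable M n X \<longleftrightarrow>
     (\<forall>\<pi>. \<pi> permutes {..<n} \<longrightarrow> distr M (SpM n) (\<lambda>\<omega>. X \<omega> \<circ> \<pi>) = distr M (SpM n) X)"

definition tight_measure :: "'a::topological_space measure \<Rightarrow> bool" where
  "tight_measure P \<longleftrightarrow> (\<forall>e>0. \<exists>K. compact K \<and> K \<in> sets P \<and> measure P K \<ge> 1 - e)"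

definition extending_functional ::
  "'w measure \<Rightarrow> ('w \<Rightarrow> nat \<Rightarrow> 'a::topological_space) \<Rightarrow> nat \<Rightarrow> nat
     \<Rightarrow> (((nat \<Rightarrow> 'a) \<Rightarrow> real) \<Rightarrow> real) \<Rightarrow> bool" where
  "extending_functional M X n N L \<longleftrightarrow>
     (\<forall>f\<in>bmeas N. \<forall>g\<in>bmeas N. \<forall>a b. L (\<lambda>x. a * f x + b * g x) = a * L f + b * L g)
   \<and> (\<forall>f\<in>bmeas N. \<forall>\<pi>. \<pi> permutes {..<N} \<longrightarrow> L (\<lambda>x. f (x \<circ> \<pi>)) = L f)
   \<and> (\<forall>g\<in>bmeas n. L (U N n g) = (\<integral>\<omega>. g (X \<omega>) \<partial>M))
   \<and> fnorm N L (bmeas N) = fnorm N L (U N n ` bmeas n)"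

definition Cc :: "nat \<Rightarrow> ((nat \<Rightarrow> 'a::topological_space) \<Rightarrow> real) set" where
  "Cc N = {f. continuous_map (product_topology (\<lambda>_. euclidean) {..<N}) euclideanreal f
             \<and> compactin (product_topology (\<lambda>_. euclidean) {..<N})
                 ((product_topology (\<lambda>_. euclidean) {..<N}) closure_of
                    {x\<in>topspace (product_topology (\<lambda>_. euclidean) {..<N}). f x \<noteq> 0})}"

end

theory Submission
  imports Defs
begin

lemma card_inj_funcset:
  assumes "finite S" "finite T" "card S \<le> card T"
  shows "card {f. f \<in> S \<rightarrow>\<^sub>E T \<and> inj_on f S} = (\<Prod>i<card S. card T - i)"
  using assms
proof (induct S arbitrary: T rule: finite_induct)
  case empty
  then show ?case by (simp add: Collect_conv_if PiE_empty_domain)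
next
  case (insert x S)
  have fin: "finite {g. g \<in> S \<rightarrow>\<^sub>E (T - {y}) \<and> inj_on g S}" for y
    by (rule finite_subset[OF _ finite_PiE[OF \<open>finite S\<close>, of "\<lambda>_. T - {y}"]]) (use insert in auto)
  have hyps: "\<forall>y \<in> T. card {g. g \<in> S \<rightarrow>\<^sub>E (T - {y}) \<and> inj_on g S} = (\<Prod>i<card S. card T - 1 - i)"
  proof
    fix y assume "y \<in> T"
    then have "card (T - {y}) = card T - 1" "card S \<le> card (T - {y})"
      using insert by auto
    then show "card {g. g \<in> S \<rightarrow>\<^sub>E (T - {y}) \<and> inj_on g S} = (\<Prod>i<card S. card T - 1 - i)"
      using insert by auto
  qed
  have "card {f. f \<in> (insert x S) \<rightarrow>\<^sub>E T \<and> inj_on f (insert x S)} =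
      card ((\<lambda>(y, g). g(x := y)) ` {(y, g). y \<in> T \<and> g \<in> S \<rightarrow>\<^sub>E (T - {y}) \<and> inj_on g S})"
    using extensional_funcset_extend_domain_inj_on_eq[OF \<open>x \<notin> S\<close>] by metis
  also have "\<dots> = card {(y, g). y \<in> T \<and> g \<in> S \<rightarrow>\<^sub>E (T - {y}) \<and> inj_on g S}"
    using extensional_funcset_extend_domain_inj_onI[OF \<open>x \<notin> S\<close>, of T]
    by (simp add: card_image)
  also have "{(y, g). y \<in> T \<and> g \<in> S \<rightarrow>\<^sub>E (T - {y}) \<and> inj_on g S} =
      Sigma T (\<lambda>y. {g. g \<in> S \<rightarrow>\<^sub>E (T - {y}) \<and> inj_on g S})"
    by auto
  also have "card \<dots> = (\<Sum>y \<in> T. card {g. g \<in> S \<rightarrow>\<^sub>E (T - {y}) \<and> inj_on g S})"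
    using fin \<open>finite T\<close> by (simp add: card_SigmaI)
  also have "\<dots> = card T * (\<Prod>i<card S. card T - 1 - i)"
    using hyps by simp
  also have "\<dots> = (\<Prod>i<card (insert x S). card T - i)"
  proof -
    have "card (insert x S) = Suc (card S)" using insert by simp
    then show ?thesis by (simp only: prod.lessThan_Suc_shift) (simp del: prod.lessThan_Suc)
  qed
  finally show ?case .
qed

lemma card_injs: "n \<le> N \<Longrightarrow> card (injs n N) = (\<Prod>i<n. N - i)"
  unfolding injs_def using card_inj_funcset[of "{..<n}" "{..<N}"] by simp

lemma lch_urysohn:
  assumes lc: "locally_compact_space X" and H: "Hausdorff_space X" and K: "compactin X K"
  obtains \<phi> where "continuous_map X euclideanreal \<phi>" "\<And>x. 0 \<le> \<phi> x \<and> \<phi> x \<le> 1"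
    "\<And>x. x \<in> K \<Longrightarrow> \<phi> x = 1" "compactin X (X closure_of {x\<in>topspace X. \<phi> x \<noteq> 0})"
proof -
  obtain U L where UL: "openin X U" "compactin X L" "closedin X L" "K \<subseteq> U" "U \<subseteq> L"
    using lc K H locally_compact_space_compact_closed_compact by metis
  have Ltop: "L \<subseteq> topspace X" using UL closedin_subset by blast
  have "normal_space (subtopology X L)"
    by (rule compact_Hausdorff_or_regular_imp_normal_space)
       (use UL H in \<open>auto simp: compact_space_subtopology Hausdorff_space_subtopology\<close>)
  moreover have "closedin (subtopology X L) (L - U)"
    unfolding closedin_subtopology
  proof (intro exI conjI)
    show "closedin X (topspace X - U)" using UL by blast
    show "L - U = (topspace X - U) \<inter> L" using Ltop by blast
  qed
  moreover have "closedin (subtopology X L) K"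
    using UL H K by (metis closedin_subset_topspace compactin_imp_closedin order.trans)
  moreover have "disjnt (L - U) K" using UL by (auto simp: disjnt_def)
  ultimately obtain f where f: "continuous_map (subtopology X L) (top_of_set {0..1::real}) f"
     "f ` (L - U) \<subseteq> {0}" "f ` K \<subseteq> {1}"
    using Urysohn_lemma[of "subtopology X L" "L - U" K 0 1] by auto
  have fr: "f x \<in> {0..1}" if "x \<in> L" for x
    using f(1) that Ltop by (auto simp: continuous_map_def)
  define \<phi> where "\<phi> x = (if x \<in> L then f x else 0)" for x
  show ?thesis
  proof
    show "continuous_map X euclideanreal \<phi>"
      unfolding \<phi>_def
    proof (rule continuous_map_cases)
      have "X closure_of {x. x \<in> L} = L" using UL(3) closure_of_eq[of X L] by (simp add: Collect_mem_eq)
      then show "continuous_map (subtopology X (X closure_of {x. x \<in> L})) euclideanreal f"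
        using f(1) continuous_map_in_subtopology[of "subtopology X L" euclideanreal "{0..1}" f] by simp
      show "continuous_map (subtopology X (X closure_of {x. x \<notin> L})) euclideanreal (\<lambda>x. 0)"
        by simp
      fix x assume x: "x \<in> X frontier_of {x. x \<in> L}"
      have "U \<subseteq> X interior_of L" using UL interior_of_maximal by blast
      moreover have "X closure_of L = L" using UL(3) closure_of_eq[of X L] by simp
      ultimately have "x \<in> L - U" using x by (auto simp: frontier_of_def)
      then show "f x = 0" using f(2) by auto
    qed
    show "0 \<le> \<phi> x \<and> \<phi> x \<le> 1" for x using fr[of x] by (auto simp: \<phi>_def)
    show "\<phi> x = 1" if "x \<in> K" for x using that f(3) UL by (auto simp: \<phi>_def)
    have "X closure_of {x\<in>topspace X. \<phi> x \<noteq> 0} \<subseteq> L"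
      by (rule closure_of_minimal) (use UL in \<open>auto simp: \<phi>_def split: if_splits\<close>)
    then show "compactin X (X closure_of {x\<in>topspace X. \<phi> x \<noteq> 0})"
      using UL closed_compactin closedin_closure_of by blast
  qed
qed

lemma space_SpM: "space (SpM k :: (nat \<Rightarrow> 'a::topological_space) measure) = {..<k} \<rightarrow>\<^sub>E UNIV"
  by (simp add: space_PiM)

lemma space_SpM_ne: "space (SpM k :: (nat \<Rightarrow> 'a::topological_space) measure) \<noteq> {}"
  by (simp add: space_PiM PiE_eq_empty_iff)

lemma bmeas_lin:
  fixes f g :: "(nat \<Rightarrow> 'a::topological_space) \<Rightarrow> real"
  shows "f \<in> bmeas k \<Longrightarrow> g \<in> bmeas k \<Longrightarrow> (\<lambda>x. a * f x + b * g x) \<in> bmeas k"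
proof -
  assume f: "f \<in> bmeas k" and g: "g \<in> bmeas k"
  then obtain B1 B2 where B: "\<forall>x\<in>space (SpM k). \<bar>f x\<bar> \<le> B1" "\<forall>x\<in>space (SpM k). \<bar>g x\<bar> \<le> B2"
    by (auto simp: bmeas_def)
  have "\<forall>x\<in>space (SpM k). \<bar>a * f x + b * g x\<bar> \<le> \<bar>a\<bar> * B1 + \<bar>b\<bar> * B2"
  proof
    fix x :: "nat \<Rightarrow> 'a" assume x: "x \<in> space (SpM k)"
    have "\<bar>a * f x + b * g x\<bar> \<le> \<bar>a\<bar> * \<bar>f x\<bar> + \<bar>b\<bar> * \<bar>g x\<bar>"
      by (metis abs_mult abs_triangle_ineq)
    also have "\<dots> \<le> \<bar>a\<bar> * B1 + \<bar>b\<bar> * B2"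
      using B x by (intro add_mono mult_left_mono) auto
    finally show "\<bar>a * f x + b * g x\<bar> \<le> \<bar>a\<bar> * B1 + \<bar>b\<bar> * B2" .
  qed
  then show ?thesis using f g by (auto simp: bmeas_def)
qed

lemma bmeas_const: "(\<lambda>x::nat \<Rightarrow> 'a::topological_space. c) \<in> bmeas k"
  by (auto simp: bmeas_def)

lemma supnorm_upper:
  fixes f :: "(nat \<Rightarrow> 'a::topological_space) \<Rightarrow> real"
  shows "f \<in> bmeas k \<Longrightarrow> x \<in> space (SpM k) \<Longrightarrow> \<bar>f x\<bar> \<le> supnorm k f"
proof -
  assume f: "f \<in> bmeas k" and x: "x \<in> space (SpM k)"
  then obtain B where B: "\<forall>x\<in>space (SpM k). \<bar>f x\<bar> \<le> B" by (auto simp: bmeas_def)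
  have "bdd_above ((\<lambda>x. \<bar>f x\<bar>) ` space (SpM k))"
    using B by (intro bdd_aboveI2[where M=B]) auto
  then show ?thesis unfolding supnorm_def using x by (rule cSUP_upper2) simp
qed

lemma supnorm_le:
  fixes f :: "(nat \<Rightarrow> 'a::topological_space) \<Rightarrow> real"
  shows "(\<And>x. x \<in> space (SpM k) \<Longrightarrow> \<bar>f x\<bar> \<le> B) \<Longrightarrow> supnorm k f \<le> B"
  unfolding supnorm_def
  by (rule cSUP_least) (use space_SpM_ne in auto)

lemma finite_injs: "finite (injs n N)"
  unfolding injs_def by (rule finite_subset[OF _ finite_PiE[of "{..<n}" "\<lambda>_. {..<N}"]]) auto

lemma injs_meas:
  assumes "\<sigma> \<in> injs n N"
  shows "(\<lambda>x::nat\<Rightarrow>'a::topological_space. restrict (x \<circ> \<sigma>) {..<n}) \<in> measurable (SpM N) (SpM n)"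
proof -
  have eq: "(\<lambda>x. restrict (x \<circ> \<sigma>) {..<n}) = (\<lambda>x. \<lambda>i\<in>{..<n}. x (\<sigma> i))"
    by (simp add: comp_def)
  have "\<sigma> i \<in> {..<N}" if "i \<in> {..<n}" for i
    using assms that by (auto simp: injs_def)
  then show ?thesis unfolding eq
    by (intro measurable_restrict measurable_component_singleton) auto
qed

lemma U_bmeas:
  fixes g :: "(nat \<Rightarrow> 'a::topological_space) \<Rightarrow> real"
  assumes g: "g \<in> bmeas n"
  shows "U N n g \<in> bmeas N"
proof -
  obtain B where B: "\<forall>y\<in>space (SpM n). \<bar>g y\<bar> \<le> B" and gm: "g \<in> borel_measurable (SpM n)"
    using g by (auto simp: bmeas_def)
  have "(\<lambda>x. g (restrict (x \<circ> \<sigma>) {..<n})) \<in> borel_measurable (SpM N)" if "\<sigma> \<in> injs n N" for \<sigma>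
    using measurable_compose[OF injs_meas[OF that] gm] .
  then have "(\<lambda>x. \<Sum>\<sigma>\<in>injs n N. g (restrict (x \<circ> \<sigma>) {..<n})) \<in> borel_measurable (SpM N)"
    by (rule borel_measurable_sum)
  then have m: "U N n g \<in> borel_measurable (SpM N)"
    unfolding U_def by (rule borel_measurable_times[OF borel_measurable_const])
  have "\<forall>x\<in>space (SpM N). \<bar>U N n g x\<bar> \<le> \<bar>1 / ffac N n\<bar> * (real (card (injs n N)) * B)"
  proof
    fix x :: "nat \<Rightarrow> 'a" assume x: "x \<in> space (SpM N)"
    have "\<bar>(\<Sum>\<sigma>\<in>injs n N. g (restrict (x \<circ> \<sigma>) {..<n}))\<bar> \<le> (\<Sum>\<sigma>\<in>injs n N. \<bar>g (restrict (x \<circ> \<sigma>) {..<n})\<bar>)"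
      by (rule sum_abs)
    also have "\<dots> \<le> (\<Sum>\<sigma>\<in>injs n N. B)"
      by (rule sum_mono) (use B in \<open>auto simp: space_SpM\<close>)
    also have "\<dots> = real (card (injs n N)) * B" by simp
    finally show "\<bar>U N n g x\<bar> \<le> \<bar>1 / ffac N n\<bar> * (real (card (injs n N)) * B)"
      unfolding U_def abs_mult by (intro mult_left_mono) auto
  qed
  then show ?thesis using m by (auto simp: bmeas_def)
qed

lemma one_minus_prod_le:
  fixes f :: "'b \<Rightarrow> real"
  assumes "finite A" "\<And>a. a \<in> A \<Longrightarrow> 0 \<le> f a \<and> f a \<le> 1"
  shows "1 - prod f A \<le> (\<Sum>a\<in>A. 1 - f a)"
  using assms
proof (induct A rule: finite_induct)
  case empty then show ?case by simp
next
  case (insert a A)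
  have h1: "0 \<le> prod f A" "prod f A \<le> 1" using insert by (auto intro: prod_nonneg prod_le_1)
  have h2: "0 \<le> f a" "f a \<le> 1" using insert by auto
  have h3: "1 - prod f A \<le> (\<Sum>a\<in>A. 1 - f a)" using insert by auto
  have "1 - f a * prod f A \<le> (1 - f a) + (\<Sum>a\<in>A. 1 - f a)"
  proof -
    have "0 \<le> (1 - f a) * (1 - prod f A)" using h1 h2 by (intro mult_nonneg_nonneg) auto
    moreover have "(1 - f a) * (1 - prod f A) = 1 - f a - prod f A + f a * prod f A"
      by (simp add: algebra_simps)
    ultimately show ?thesis using h3 by linarith
  qed
  then show ?case using insert by simp
qed

lemma Hausdorff_euclidean_t2: "Hausdorff_space (euclidean :: 'a::t2_space topology)"
  unfolding Hausdorff_space_def disjnt_def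
proof (intro allI impI)
  fix x y :: 'a assume "x \<in> topspace euclidean \<and> y \<in> topspace euclidean \<and> x \<noteq> y"
  then have "x \<noteq> y" by blast
  from hausdorff[OF this] obtain U V where UV: "open U" "open V" "x \<in> U" "y \<in> V" "U \<inter> V = {}"
    by blast
  show "\<exists>U V. openin euclidean U \<and> openin euclidean V \<and> x \<in> U \<and> y \<in> V \<and> U \<inter> V = {}"
    by (rule exI[of _ U], rule exI[of _ V]) (simp add: UV flip: open_openin)
qed

lemma h_Cc:
  fixes \<phi> :: "'a::topological_space \<Rightarrow> real"
  assumes c: "continuous_map euclidean euclideanreal \<phi>"
    and s: "compactin euclidean (euclidean closure_of {x\<in>topspace euclidean. \<phi> x \<noteq> 0})"
  shows "(\<lambda>x::nat \<Rightarrow> 'a. \<Prod>j<N. \<phi> (x j)) \<in> Cc N"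
proof -
  let ?PT = "product_topology (\<lambda>_. euclidean) {..<N} :: (nat \<Rightarrow> 'a) topology"
  let ?C = "euclidean closure_of {x\<in>topspace euclidean. \<phi> x \<noteq> 0}"
  let ?T = "PiE {..<N} (\<lambda>_. ?C)"
  have cj: "continuous_map ?PT euclideanreal (\<lambda>x. \<phi> (x j))" if "j \<in> {..<N}" for j
    using continuous_map_compose[OF continuous_map_product_projection[where X="\<lambda>_. euclidean", OF that] c]
    by (simp add: comp_def)
  have cont: "continuous_map ?PT euclideanreal (\<lambda>x. \<Prod>j<N. \<phi> (x j))"
    by (rule continuous_map_prod) (use cj in auto)
  have cT: "compactin ?PT ?T" using s by (simp add: compactin_PiE)
  have clT: "closedin ?PT ?T" by (simp add: closedin_product_topology)
  have sub: "{x\<in>topspace ?PT. (\<Prod>j<N. \<phi> (x j)) \<noteq> 0} \<subseteq> ?T"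
  proof
    fix x assume x: "x \<in> {x\<in>topspace ?PT. (\<Prod>j<N. \<phi> (x j)) \<noteq> 0}"
    have "x j \<in> ?C" if "j < N" for j
    proof -
      have "\<phi> (x j) \<noteq> 0" using x that by auto
      then have "x j \<in> {x\<in>topspace euclidean. \<phi> x \<noteq> 0}" by simp
      then show ?thesis using closure_of_subset[of "{x\<in>topspace euclidean. \<phi> x \<noteq> 0}" euclidean] by auto
    qed
    then show "x \<in> ?T" using x by (auto simp: PiE_iff)
  qed
  have "?PT closure_of {x\<in>topspace ?PT. (\<Prod>j<N. \<phi> (x j)) \<noteq> 0} \<subseteq> ?T"
    by (rule closure_of_minimal[OF sub clT])
  then have "compactin ?PT (?PT closure_of {x\<in>topspace ?PT. (\<Prod>j<N. \<phi> (x j)) \<noteq> 0})"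
    by (rule closed_compactin[OF cT]) simp
  then show ?thesis using cont unfolding Cc_def by simp
qed

theorem lemma11:
  fixes M :: "'w measure" and X :: "'w \<Rightarrow> nat \<Rightarrow> 'a::t2_space"
    and n N :: nat and L :: "((nat \<Rightarrow> 'a) \<Rightarrow> real) \<Rightarrow> real"
  assumes lc: "locally_compact_space (euclidean :: 'a topology)"
    and nN: "0 < n" "n < N"
    and P: "prob_space M"
    and Xm: "X \<in> measurable M (SpM n)"
    and exch: "exchangeable M n X"
    and tight: "tight_measure (distr M borel (\<lambda>\<omega>. X \<omega> 0))"
    and ext: "extending_functional M X n N L"
    and norm1: "fnorm N L (bmeas N) = 1"
  shows "fnorm N L (Cc N \<inter> bmeas N) = 1"
proof -
  have lin: "\<And>f g a b. f \<in> bmeas N \<Longrightarrow> g \<in> bmeas N \<Longrightarrow> L (\<lambda>x. a * f x + b * g x) = a * L f + b * L g"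
    using ext unfolding extending_functional_def by blast
  have Ueq: "\<And>g. g \<in> bmeas n \<Longrightarrow> L (U N n g) = (\<integral>\<omega>. g (X \<omega>) \<partial>M)"
    using ext unfolding extending_functional_def by blast
  have sc: "L (\<lambda>x. a * f x) = a * L f" if f: "f \<in> bmeas N" for f a
  proof -
    have "L (\<lambda>x. a * f x + 0 * f x) = a * L f + 0 * L f" by (rule lin[OF f f])
    then show ?thesis by simp
  qed
  have b1: "\<bar>L f\<bar> \<le> 1" if "f \<in> bmeas N" "supnorm N f \<le> 1" for f
  proof -
    have "ereal \<bar>L f\<bar> \<le> fnorm N L (bmeas N)" unfolding fnorm_def
      by (rule SUP_upper) (use that in auto)
    then show ?thesis using norm1 by simp
  qed
  obtain x0 :: "nat \<Rightarrow> 'a" where x0: "x0 \<in> space (SpM N)" using space_SpM_ne by blast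
  have bnd: "\<bar>L f\<bar> \<le> supnorm N f" if f: "f \<in> bmeas N" for f
  proof -
    have s0: "0 \<le> supnorm N f" using supnorm_upper[OF f x0] by linarith
    show "\<bar>L f\<bar> \<le> supnorm N f"
    proof (rule field_le_epsilon)
      fix e :: real assume e: "0 < e"
      define s where "s = supnorm N f + e"
      have s: "0 < s" using s0 e by (simp add: s_def)
      have g: "(\<lambda>x. (1/s) * f x) \<in> bmeas N" using bmeas_lin[OF f f, of "1/s" 0] by simp
      have "supnorm N (\<lambda>x. (1/s) * f x) \<le> 1"
      proof (rule supnorm_le)
        fix x :: "nat \<Rightarrow> 'a" assume x: "x \<in> space (SpM N)"
        have "\<bar>f x\<bar> \<le> s" using supnorm_upper[OF f x] e by (simp add: s_def)
        then show "\<bar>(1/s) * f x\<bar> \<le> 1" using s by (simp add: abs_mult field_simps)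
      qed
      then have "\<bar>L (\<lambda>x. (1/s) * f x)\<bar> \<le> 1" by (rule b1[OF g])
      then have "\<bar>L f\<bar> / s \<le> 1" using sc[OF f, of "1/s"] s by (simp add: abs_mult)
      then show "\<bar>L f\<bar> \<le> supnorm N f + e" using s by (simp add: s_def field_simps)
    qed
  qed
  have ffac_pos: "0 < ffac N n" unfolding ffac_def using nN by (intro prod_pos) auto
  have card_eq: "real (card (injs n N)) = ffac N n"
    using card_injs[of n N] nN by (simp add: ffac_def)
  have one_b: "(\<lambda>x::nat\<Rightarrow>'a. 1::real) \<in> bmeas N" by (rule bmeas_const)
  have one: "L (\<lambda>x. 1) = 1"
  proof -
    have "U N n (\<lambda>y. 1) = (\<lambda>x::nat\<Rightarrow>'a. 1)" unfolding U_def using card_eq ffac_pos by simp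
    moreover have "L (U N n (\<lambda>y. 1)) = 1"
      using Ueq[OF bmeas_const] prob_space.prob_space[OF P] by simp
    ultimately show ?thesis by simp
  qed
  have pos: "0 \<le> L f" if f: "f \<in> bmeas N" and nn: "\<And>x. x \<in> space (SpM N) \<Longrightarrow> 0 \<le> f x" for f
  proof -
    define B where "B = supnorm N f + 1"
    have s0: "0 \<le> supnorm N f" using supnorm_upper[OF f x0] by linarith
    have B: "0 < B" using s0 by (simp add: B_def)
    define g where "g = (\<lambda>x. 1 * 1 + (- 1 / B) * f x)"
    have gb: "g \<in> bmeas N" unfolding g_def by (rule bmeas_lin[OF one_b f])
    have "supnorm N g \<le> 1"
    proof (rule supnorm_le)
      fix x :: "nat \<Rightarrow> 'a" assume x: "x \<in> space (SpM N)"
      have "0 \<le> f x" "f x \<le> B" using nn[OF x] supnorm_upper[OF f x] by (auto simp: B_def)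
      then have "0 \<le> f x / B" "f x / B \<le> 1" using B by (auto simp: field_simps)
      moreover have "g x = 1 - f x / B" by (simp add: g_def)
      ultimately show "\<bar>g x\<bar> \<le> 1" by simp
    qed
    then have "\<bar>L g\<bar> \<le> 1" by (rule b1[OF gb])
    moreover have "L g = 1 - L f / B" unfolding g_def using lin[OF one_b f, of 1 "-1/B"] one by simp
    ultimately have "0 \<le> L f / B" by simp
    then show "0 \<le> L f" using B by (simp add: zero_le_divide_iff)
  qed
  have low: "ereal (1 - \<delta>) \<le> fnorm N L (Cc N \<inter> bmeas N)" if \<delta>: "0 < \<delta>" for \<delta> :: real
  proof -
    define C where "C = real N * ffac N n"
    have C: "0 < C" using nN ffac_pos by (simp add: C_def)
    define Pm where "Pm = distr M borel (\<lambda>\<omega>. X \<omega> 0)"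
    obtain K where K: "compact K" "K \<in> sets Pm" "measure Pm K \<ge> 1 - \<delta> / C"
      using tight[unfolded tight_measure_def, rule_format, of "\<delta> / C"] \<delta> C by (auto simp: Pm_def)
    obtain \<phi> where \<phi>: "continuous_map euclidean euclideanreal \<phi>" "\<And>x. 0 \<le> \<phi> x \<and> \<phi> x \<le> 1"
      "\<And>x. x \<in> K \<Longrightarrow> \<phi> x = 1" "compactin euclidean (euclidean closure_of {x\<in>topspace euclidean. \<phi> x \<noteq> 0})"
      using lch_urysohn[OF lc Hausdorff_euclidean_t2, of K] K(1) by auto
    have \<phi>m: "\<phi> \<in> borel_measurable borel" using \<phi>(1) by (simp add: borel_measurable_continuous_onI)
    define h where "h = (\<lambda>x::nat \<Rightarrow> 'a. \<Prod>j<N. \<phi> (x j))"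
    have h01: "0 \<le> h x \<and> h x \<le> 1" for x unfolding h_def using \<phi>(2) by (auto intro: prod_nonneg prod_le_1)
    have hm: "h \<in> borel_measurable (SpM N)" unfolding h_def
    proof (rule borel_measurable_prod)
      fix j assume j: "j \<in> {..<N}"
      have "(\<lambda>x::nat\<Rightarrow>'a. x j) \<in> measurable (SpM N) borel"
        using measurable_component_singleton[OF j, of "\<lambda>_. borel"] by simp
      then show "(\<lambda>x::nat\<Rightarrow>'a. \<phi> (x j)) \<in> borel_measurable (SpM N)"
        using measurable_compose[OF _ \<phi>m] by blast
    qed
    have hb: "h \<in> bmeas N" using hm h01 unfolding bmeas_def by (auto intro!: exI[of _ 1])
    have hC: "h \<in> Cc N" unfolding h_def by (rule h_Cc[OF \<phi>(1) \<phi>(4)])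
    have hs: "supnorm N h \<le> 1" by (rule supnorm_le) (use h01 in auto)
    have c0: "(0::nat) \<in> {..<n}" using nN by simp
    have comp0: "(\<lambda>x::nat\<Rightarrow>'a. x 0) \<in> measurable (SpM n) borel"
      using measurable_component_singleton[OF c0, of "\<lambda>_. borel"] by simp
    define g' where "g' = (\<lambda>y::nat\<Rightarrow>'a. 1 - \<phi> (y 0))"
    have g'm: "g' \<in> borel_measurable (SpM n)" unfolding g'_def
      by (intro borel_measurable_diff borel_measurable_const measurable_compose[OF comp0 \<phi>m])
    have g'b: "g' \<in> bmeas n" using g'm \<phi>(2) unfolding bmeas_def g'_def by (auto intro!: exI[of _ 1])
    have Xm0: "(\<lambda>\<omega>. X \<omega> 0) \<in> measurable M borel"
      using measurable_compose[OF Xm comp0] .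
    have PP: "prob_space Pm" unfolding Pm_def by (rule prob_space.prob_space_distr[OF P Xm0])
    have spPm: "space Pm = UNIV" by (simp add: Pm_def)
    have "open (UNIV - K)" using compact_imp_closed[OF K(1)] by (simp add: open_Diff)
    then have Kc: "UNIV - K \<in> sets Pm" by (simp add: Pm_def borel_open)
    have m1: "(\<lambda>y. 1 - \<phi> y) \<in> borel_measurable borel"
      by (intro borel_measurable_diff borel_measurable_const \<phi>m)
    have Lg': "L (U N n g') \<le> \<delta> / C"
    proof -
      have "L (U N n g') = (\<integral>\<omega>. g' (X \<omega>) \<partial>M)" by (rule Ueq[OF g'b])
      also have "\<dots> = (\<integral>\<omega>. 1 - \<phi> (X \<omega> 0) \<partial>M)" by (simp add: g'_def)
      also have "\<dots> = (\<integral>y. 1 - \<phi> y \<partial>Pm)" unfolding Pm_def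
        by (rule integral_distr[OF Xm0 m1, symmetric])
      also have "\<dots> \<le> (\<integral>y. indicator (UNIV - K) y \<partial>Pm)"
      proof (rule integral_mono)
        show "integrable Pm (\<lambda>y. 1 - \<phi> y)"
          by (rule finite_measure.integrable_const_bound[where B=1])
             (use PP prob_space_def \<phi>(2) m1 in \<open>auto simp: Pm_def\<close>)
        show "integrable Pm (indicator (UNIV - K) :: 'a \<Rightarrow> real)"
          by (rule finite_measure.integrable_const_bound[where B=1])
             (use PP prob_space_def Kc in \<open>auto simp: indicator_def\<close>)
        show "1 - \<phi> y \<le> indicator (UNIV - K) y" for y
          using \<phi>(2)[of y] \<phi>(3)[of y] by (cases "y \<in> K") auto
      qed
      also have "\<dots> = measure Pm (UNIV - K)"
        by (simp add: spPm)
      also have "\<dots> = 1 - measure Pm K"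
        using prob_space.prob_compl[OF PP K(2)] spPm by simp
      also have "\<dots> \<le> \<delta> / C" using K(3) by simp
      finally show ?thesis .
    qed
    have ptw: "1 - h x \<le> C * U N n g' x" if x: "x \<in> space (SpM N)" for x
    proof -
      define S where "S = (\<Sum>\<sigma>\<in>injs n N. 1 - \<phi> (x (\<sigma> 0)))"
      have Ueq2: "U N n g' x = S / ffac N n" unfolding U_def g'_def S_def using nN by simp
      have "1 - h x \<le> (\<Sum>j<N. 1 - \<phi> (x j))" unfolding h_def
        by (rule one_minus_prod_le) (use \<phi>(2) in auto)
      also have "\<dots> \<le> (\<Sum>j<N. S)"
      proof (rule sum_mono)
        fix j assume j: "j \<in> {..<N}"
        define \<sigma> where "\<sigma> = (\<lambda>i\<in>{..<n}. if i = 0 then j else if i = j then 0 else i)"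
        have \<sigma>in: "\<sigma> \<in> injs n N"
          unfolding injs_def \<sigma>_def using j nN by (auto simp: inj_on_def)
        have "1 - \<phi> (x (\<sigma> 0)) \<le> S" unfolding S_def
          by (rule member_le_sum[where f="\<lambda>\<sigma>. 1 - \<phi> (x (\<sigma> 0))", OF \<sigma>in _ finite_injs]) (use \<phi>(2) in auto)
        moreover have "\<sigma> 0 = j" using nN by (simp add: \<sigma>_def)
        ultimately show "1 - \<phi> (x j) \<le> S" by simp
      qed
      also have "\<dots> = real N * S" by simp
      also have "\<dots> = C * U N n g' x" using ffac_pos by (simp add: Ueq2 C_def)
      finally show ?thesis .
    qed
    define k where "k = (\<lambda>x::nat\<Rightarrow>'a. 1 * 1 + (-1) * h x)"
    have kb: "k \<in> bmeas N" unfolding k_def by (rule bmeas_lin[OF one_b hb])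
    have Lk: "L k = 1 - L h" unfolding k_def using lin[OF one_b hb, of 1 "-1"] one by simp
    have Ub: "U N n g' \<in> bmeas N" by (rule U_bmeas[OF g'b])
    define F where "F = (\<lambda>x. C * U N n g' x + (-1) * k x)"
    have Fb: "F \<in> bmeas N" unfolding F_def by (rule bmeas_lin[OF Ub kb])
    have LF: "L F = C * L (U N n g') - L k" unfolding F_def using lin[OF Ub kb, of C "-1"] by simp
    have "0 \<le> L F"
    proof (rule pos[OF Fb])
      fix x :: "nat \<Rightarrow> 'a" assume "x \<in> space (SpM N)"
      from ptw[OF this] show "0 \<le> F x" unfolding F_def k_def by simp
    qed
    then have "1 - L h \<le> C * L (U N n g')" using LF Lk by simp
    also have "\<dots> \<le> C * (\<delta> / C)" using Lg' C by (intro mult_left_mono) auto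
    also have "\<dots> = \<delta>" using C by simp
    finally have "1 - \<delta> \<le> L h" by simp
    then have "ereal (1 - \<delta>) \<le> ereal \<bar>L h\<bar>" by simp
    also have "\<dots> \<le> fnorm N L (Cc N \<inter> bmeas N)" unfolding fnorm_def
      by (rule SUP_upper) (use hC hb hs in auto)
    finally show ?thesis .
  qed
  have "fnorm N L (Cc N \<inter> bmeas N) \<le> fnorm N L (bmeas N)" unfolding fnorm_def
    by (rule SUP_subset_mono) auto
  then have up: "fnorm N L (Cc N \<inter> bmeas N) \<le> 1" using norm1 by simp
  show ?thesis
  proof (rule antisym[OF up])
    show "1 \<le> fnorm N L (Cc N \<inter> bmeas N)"
    proof (rule ccontr)
      assume "\<not> 1 \<le> fnorm N L (Cc N \<inter> bmeas N)"
      then have "fnorm N L (Cc N \<inter> bmeas N) < 1" by simp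
      then obtain z where z: "fnorm N L (Cc N \<inter> bmeas N) < ereal z" "ereal z < 1"
        using ereal_dense2 by blast
      then have "0 < 1 - z" by simp
      from low[OF this] z(1) show False by simp
    qed
  qed
qed

end
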